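(* Consider a chunk-based peer-to-peer streaming system as described in the context, in which every node (the source and every peer) has normalized upload capacity $U$, where $U\ge 1$ is an integer, and every node delivers chunks to at most $k$ distinct overlay neighbors, where $k\ge 1$ is an integer. Then for every integer $t\ge 0$ the stream diffusion metric satisfies $$N(t)\le \overline{N}(t):=\sum_{j=1}^{U} S_k(t-j+1),$$ and for every non-integer real $t\ge 0$ it satisfies $N(t)\le \overline{N}(\lfloor t\rfloor)$.
   Context: $k$-step Fibonacci sequence: for integers $i$, $F_k(i)=0$ if $i\le 0$, $F_k(1)=1$, and $F_k(i)=\sum_{j=1}^{k}F_k(i-j)$ for $i>1$. Its partial sums are $S_k(n)=0$ for $n\le 0$ and $S_k(n)=\sum_{i=1}^{n}F_k(i)$ for $n>0$. Model: there is a source node and a (finite or infinite) set $\mathcal P$ of peers. A stream of constant bit rate $R_{bps}$ is cut at the source into chunks of $C$ bits, so chunk $c=1,2,3,\dots$ becomes available at the source every $T=C/R_{bps}$ seconds. Every node has the same upload bandwidth $U_{bps}$, and $U=U_{bps}/R_{bps}$ is assumed to be an integer $\ge 1$. Time is measured in units of $T^*=C/U_{bps}$ (the time to transmit one chunk using a node's entire upload bandwidth); hence chunk $c$ is generated at time $(c-1)U$. A node may split its upload bandwidth arbitrarily among simultaneous transmissions, but its total upload rate is at most one chunk per time unit. Transmission is store-and-forward: a peer may forward a chunk only after it has completely received it. Download bandwidth is unlimited, and propagation and network queueing delays are zero. Each node sends chunks to at most $k$ distinct neighbors. For a chunk $c$ and a peer $p$, $d(c,p)$ is the time elapsed between the generation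 of $c$ at the source and the completion of its reception at $p$. Define $D(p)=\sup_c d(c,p)$. The stream diffusion metric is $N(t)=|\{p\in\mathcal P: D(p)\le t\}|$, i.e. the number of peers that receive every chunk within time $t$ after its generation. The bound refers to the best achievable $N(t)$ over all chunk scheduling and forwarding strategies in this model. *)

theory Defs
  imports "HOL-Analysis.Analysis"
begin

function fibk :: "nat \<Rightarrow> int \<Rightarrow> nat" where
  "fibk k i = (if i \<le> 0 then 0 else if i = 1 then 1
               else (\<Sum>j\<in>{1..k}. fibk k (i - int j)))"
  by auto
termination
  by (relation "Wellfounded.measure (\<lambda>(k, i). nat i)") auto

definition Sk :: "nat \<Rightarrow> int \<Rightarrow> nat" where
  "Sk k n = (\<Sum>i\<in>{1..n}. fibk k i)"

definition Nbar :: "nat \<Rightarrow> nat \<Rightarrow> int \<Rightarrow> nat" where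
  "Nbar k U t = (\<Sum>j\<in>{1..U}. Sk k (t - int j + 1))"

text \<open>Time is measured in units of T* = C/U_bps. A schedule is given by rate functions
  rate s r c tau >= 0: the rate (in chunks per time unit) at which node s sends chunk c
  to node r at time tau.\<close>

definition gen :: "nat \<Rightarrow> nat \<Rightarrow> real" where
  "gen U c = real ((c - 1) * U)"

definition amt :: "('a \<Rightarrow> 'a \<Rightarrow> nat \<Rightarrow> real \<Rightarrow> real) \<Rightarrow> 'a \<Rightarrow> 'a \<Rightarrow> nat \<Rightarrow> real \<Rightarrow> real" where
  "amt rate s r c \<tau> = integral {0..\<tau>} (rate s r c)"

definition holds :: "'a \<Rightarrow> nat \<Rightarrow> ('a \<Rightarrow> 'a \<Rightarrow> nat \<Rightarrow> real \<Rightarrow> real) \<Rightarrow> 'a \<Rightarrow> nat \<Rightarrow> real \<Rightarrow> bool" where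
  "holds src U rate n c \<tau> =
     (if n = src then gen U c \<le> \<tau> else (\<exists>s. 1 \<le> amt rate s n c \<tau>))"

definition valid_schedule ::
  "'a \<Rightarrow> 'a set \<Rightarrow> nat \<Rightarrow> nat \<Rightarrow> ('a \<Rightarrow> 'a \<Rightarrow> nat \<Rightarrow> real \<Rightarrow> real) \<Rightarrow> bool" where
  "valid_schedule src P U k rate \<longleftrightarrow>
     \<comment> \<open>nonnegative, integrable rates\<close>
     (\<forall>s r c \<tau>. 0 \<le> rate s r c \<tau>) \<and>
     (\<forall>s r c \<tau>. rate s r c integrable_on {0..\<tau>}) \<and>
     \<comment> \<open>transmissions only between distinct nodes, of actual chunks, at times >= 0\<close>
     (\<forall>s r c \<tau>. 0 < rate s r c \<tau> \<longrightarrow>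
        s \<in> insert src P \<and> r \<in> insert src P \<and> r \<noteq> s \<and> 1 \<le> c \<and> 0 \<le> \<tau>) \<and>
     \<comment> \<open>upload capacity: total upload rate of each node at most one chunk per time unit\<close>
     (\<forall>s \<tau> F. finite F \<longrightarrow> (\<Sum>(r, c)\<in>F. rate s r c \<tau>) \<le> 1) \<and>
     \<comment> \<open>store-and-forward: a node only sends a chunk it completely holds\<close>
     (\<forall>s r c \<tau>. 0 < rate s r c \<tau> \<longrightarrow> holds src U rate s c \<tau>) \<and>
     \<comment> \<open>each node sends chunks to at most k distinct neighbours\<close>
     (\<forall>s. finite {r. \<exists>c \<tau>. 0 < rate s r c \<tau>} \<and> card {r. \<exists>c \<tau>. 0 < rate s r c \<tau>} \<le> k)"

text \<open>Completion time of reception of chunk c at peer p (infinity if never received).\<close>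
definition recv :: "('a \<Rightarrow> 'a \<Rightarrow> nat \<Rightarrow> real \<Rightarrow> real) \<Rightarrow> 'a \<Rightarrow> nat \<Rightarrow> ereal" where
  "recv rate p c = Inf (ereal ` {\<tau>. 0 \<le> \<tau> \<and> (\<exists>s. 1 \<le> amt rate s p c \<tau>)})"

definition delay :: "nat \<Rightarrow> ('a \<Rightarrow> 'a \<Rightarrow> nat \<Rightarrow> real \<Rightarrow> real) \<Rightarrow> 'a \<Rightarrow> nat \<Rightarrow> ereal" where
  "delay U rate p c = recv rate p c - ereal (gen U c)"

definition Dmax :: "nat \<Rightarrow> ('a \<Rightarrow> 'a \<Rightarrow> nat \<Rightarrow> real \<Rightarrow> real) \<Rightarrow> 'a \<Rightarrow> ereal" where
  "Dmax U rate p = (SUP c\<in>{1..}. delay U rate p c)"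

text \<open>The set of peers whose N(t) counts: D(p) <= t.\<close>
definition diffused :: "'a set \<Rightarrow> nat \<Rightarrow> ('a \<Rightarrow> 'a \<Rightarrow> nat \<Rightarrow> real \<Rightarrow> real) \<Rightarrow> real \<Rightarrow> 'a set" where
  "diffused P U rate t = {p \<in> P. Dmax U rate p \<le> ereal t}"

end

theory Submission
  imports Defs
begin

declare fibk.simps[simp del]

lemma fibk_nonpos: "i \<le> 0 \<Longrightarrow> fibk k i = 0"
  by (subst fibk.simps) simp
lemma fibk_one: "fibk k 1 = 1"
  by (subst fibk.simps) simp
lemma fibk_rec: "i \<ge> 2 \<Longrightarrow> fibk k i = (\<Sum>j\<in>{1..k}. fibk k (i - int j))"
  by (subst fibk.simps) simp

lemma Sk_nonpos: "m \<le> 0 \<Longrightarrow> Sk k m = 0"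
  unfolding Sk_def by simp

lemma Sk_step: "Sk k m = Sk k (m - 1) + fibk k m"
proof (cases "m \<le> 0")
  case True thus ?thesis by (simp add: Sk_nonpos fibk_nonpos)
next
  case False
  hence "{1..m} = insert m {1..m-1}" by auto
  thus ?thesis unfolding Sk_def by (simp add: add.commute)
qed

lemma Sk_mono_aux: "Sk k m \<le> Sk k (m + int d)"
proof (induction d)
  case (Suc d)
  have "Sk k (m + int (Suc d)) = Sk k (m + int d) + fibk k (m + int (Suc d))"
    using Sk_step[of k "m + int (Suc d)"] by simp
  thus ?case using Suc by simp
qed simp

lemma Sk_mono: "m \<le> n \<Longrightarrow> Sk k m \<le> Sk k n"
  using Sk_mono_aux[of k m "nat (n - m)"] by simp

lemma Sk_rec: "n \<ge> 1 \<Longrightarrow> Sk k n = 1 + (\<Sum>i\<in>{1..k}. Sk k (n - int i))"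
proof (induction n rule: int_ge_induct)
  case base
  have "Sk k 1 = 1" unfolding Sk_def by (simp add: fibk_one)
  moreover have "(\<Sum>i\<in>{1..k}. Sk k (1 - int i)) = 0"
    by (rule sum.neutral) (auto simp: Sk_nonpos)
  ultimately show ?case by simp
next
  case (step n)
  have "Sk k (n+1) = Sk k n + fibk k (n+1)" using Sk_step[of k "n+1"] by simp
  also have "fibk k (n+1) = (\<Sum>j\<in>{1..k}. fibk k (n + 1 - int j))"
    using step by (intro fibk_rec) simp
  also have "Sk k n = 1 + (\<Sum>i\<in>{1..k}. Sk k (n - int i))" using step by simp
  finally have "Sk k (n+1) = 1 + (\<Sum>i\<in>{1..k}. Sk k (n - int i) + fibk k (n + 1 - int i))"
    by (simp add: sum.distrib)
  also have "(\<Sum>i\<in>{1..k}. Sk k (n - int i) + fibk k (n + 1 - int i)) = (\<Sum>i\<in>{1..k}. Sk k (n + 1 - int i))"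
    by (rule sum.cong) (auto simp: Sk_step[of k "n + 1 - int _"])
  finally show ?case .
qed

definition Bf :: "nat \<Rightarrow> real \<Rightarrow> real \<Rightarrow> real" where
  "Bf k e x = real (Sk k (\<lfloor>(1 + 2*e) * x\<rfloor> + 1))"

lemma Bf_nonneg: "0 \<le> Bf k e x" by (simp add: Bf_def)

lemma Bf_mono: "0 \<le> e \<Longrightarrow> x \<le> y \<Longrightarrow> Bf k e x \<le> Bf k e y"
  unfolding Bf_def by (simp add: Sk_mono floor_mono mult_left_mono)

lemma Bf_shift:
  assumes "0 < e" "e \<le> 1/2" "1 \<le> i"
  shows "Bf k e (x + e - real i) \<le> real (Sk k (\<lfloor>(1 + 2*e) * x\<rfloor> - int i + 1))"
proof -
  have "(1 + 2*e) * (x + e - real i) \<le> (1 + 2*e) * x - real i"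
  proof -
    have "e * (2 * real i - 1 - 2*e) \<ge> 0" using assms by simp
    thus ?thesis by (simp add: algebra_simps)
  qed
  hence "\<lfloor>(1 + 2*e) * (x + e - real i)\<rfloor> \<le> \<lfloor>(1 + 2*e) * x\<rfloor> - int i"
    by (metis floor_diff_of_int floor_mono of_int_of_nat_eq)
  thus ?thesis unfolding Bf_def by (simp add: Sk_mono)
qed

lemma Bf_rec:
  assumes "0 < e" "e \<le> 1/2" "0 \<le> x"
  shows "1 + (\<Sum>i\<in>{1..k}. Bf k e (x + e - real i)) \<le> Bf k e x"
proof -
  let ?m = "\<lfloor>(1 + 2*e) * x\<rfloor>"
  have m0: "?m \<ge> 0" using assms by simp
  have "(\<Sum>i\<in>{1..k}. Bf k e (x + e - real i)) \<le> (\<Sum>i\<in>{1..k}. real (Sk k (?m + 1 - int i)))"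
  proof (rule sum_mono)
    fix i assume "i \<in> {1..k}"
    hence "Bf k e (x + e - real i) \<le> real (Sk k (?m - int i + 1))" using Bf_shift[OF assms(1,2)] by simp
    thus "Bf k e (x + e - real i) \<le> real (Sk k (?m + 1 - int i))" by (simp add: algebra_simps)
  qed
  also have "1 + \<dots> = real (Sk k (?m + 1))"
    using Sk_rec[of "?m + 1" k] m0 by simp
  finally show ?thesis unfolding Bf_def by simp
qed


lemma rearr:
  assumes "finite Q" "\<forall>\<tau>. real (card {q\<in>Q. f q \<le> \<tau>}) \<le> max 0 (\<tau> - \<sigma>)"
    "\<forall>x y. x \<le> y \<longrightarrow> g y \<le> (g x::real)"
  shows "(\<Sum>q\<in>Q. g (f q)) \<le> (\<Sum>i=1..card Q. g (\<sigma> + real i))"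
  using assms
proof (induction "card Q" arbitrary: Q)
  case 0 thus ?case by simp
next
  case (Suc n)
  hence ne: "Q \<noteq> {}" by auto
  obtain p0 where p0: "p0 \<in> Q" "\<forall>q\<in>Q. f q \<le> f p0"
  proof -
    have "Max (f ` Q) \<in> f ` Q" using Suc.prems(1) ne by simp
    then obtain p0 where "p0 \<in> Q" "f p0 = Max (f ` Q)" by auto
    moreover have "\<forall>q\<in>Q. f q \<le> Max (f ` Q)" using Suc.prems(1) by simp
    ultimately show ?thesis using that by metis
  qed
  have "{q\<in>Q. f q \<le> f p0} = Q" using p0 by auto
  hence "real (card Q) \<le> max 0 (f p0 - \<sigma>)" using Suc.prems(2) by metis
  moreover have "real (card Q) > 0" using ne Suc.prems(1) by (simp add: card_gt_0_iff)
  ultimately have big: "\<sigma> + real (card Q) \<le> f p0" by (simp add: max_def split: if_splits)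
  let ?Q = "Q - {p0}"
  have c: "card ?Q = n" using Suc.hyps(2) p0 Suc.prems(1) by simp
  have "\<forall>\<tau>. real (card {q\<in>?Q. f q \<le> \<tau>}) \<le> max 0 (\<tau> - \<sigma>)"
  proof
    fix \<tau>
    have "card {q\<in>?Q. f q \<le> \<tau>} \<le> card {q\<in>Q. f q \<le> \<tau>}"
      by (rule card_mono) (use Suc.prems(1) in auto)
    thus "real (card {q\<in>?Q. f q \<le> \<tau>}) \<le> max 0 (\<tau> - \<sigma>)" using Suc.prems(2)
      by (meson of_nat_le_iff order_trans)
  qed
  hence IH: "(\<Sum>q\<in>?Q. g (f q)) \<le> (\<Sum>i=1..n. g (\<sigma> + real i))"
    using Suc.hyps(1)[of ?Q] c Suc.prems by auto
  have "(\<Sum>q\<in>Q. g (f q)) = g (f p0) + (\<Sum>q\<in>?Q. g (f q))"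
    using p0 Suc.prems(1) by (simp add: sum.remove)
  also have "\<dots> \<le> g (\<sigma> + real (Suc n)) + (\<Sum>i=1..n. g (\<sigma> + real i))"
    using IH big Suc.prems(3) Suc.hyps(2) by (intro add_mono) auto
  also have "\<dots> = (\<Sum>i=1..Suc n. g (\<sigma> + real i))" by simp
  finally show ?case using Suc.hyps(2) by simp
qed


lemma tree_count:
  fixes R :: "'a set" and par :: "'a \<Rightarrow> 'a" and tp :: "'a \<Rightarrow> real"
  assumes e: "0 < e" "e \<le> 1/2"
    and r0: "r0 \<notin> R"
    and par: "\<forall>p\<in>R. par p \<in> R \<or> par p = r0"
    and tpT: "\<forall>p\<in>R. 0 \<le> tp p \<and> tp p \<le> T"
    and dec: "\<forall>p\<in>R. par p \<in> R \<longrightarrow> tp (par p) \<le> tp p - 1/2"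
    and chfin: "\<forall>n. finite {q\<in>R. par q = n}"
    and chk: "\<forall>n\<in>R. card {q\<in>R. par q = n} \<le> k"
    and chU: "card {q\<in>R. par q = r0} \<le> U"
    and cap: "\<forall>n\<in>R. \<forall>\<tau>. real (card {q\<in>R. par q = n \<and> tp q \<le> \<tau>}) \<le> max 0 (\<tau> - (tp n - e))"
    and cap0: "\<forall>\<tau>. real (card {q\<in>R. par q = r0 \<and> tp q \<le> \<tau>}) \<le> max 0 (\<tau> - g0)"
  shows "finite R \<and> real (card R) \<le> (\<Sum>i=1..U. Bf k e (T - g0 - real i))"
proof -
  define L where "L a = {p\<in>R. tp p \<le> a}" for a
  have Lfin: "\<forall>a. a \<le> real m / 2 - 1 \<longrightarrow> finite (L a)" for m :: nat
  proof (induction m)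
    case 0
    have "L a = {}" if "a \<le> -1" for a using tpT that by (force simp: L_def)
    thus ?case by auto
  next
    case (Suc m)
    show ?case
    proof (intro allI impI)
      fix a assume a: "a \<le> real (Suc m) / 2 - 1"
      hence "finite (L (a - 1/2))" using Suc by auto
      hence "finite ({q\<in>R. par q = r0} \<union> (\<Union>n\<in>L (a - 1/2). {q\<in>R. par q = n}))"
        using chfin by auto
      moreover have "L a \<subseteq> {q\<in>R. par q = r0} \<union> (\<Union>n\<in>L (a - 1/2). {q\<in>R. par q = n})"
      proof
        fix p assume p: "p \<in> L a"
        show "p \<in> {q\<in>R. par q = r0} \<union> (\<Union>n\<in>L (a - 1/2). {q\<in>R. par q = n})"
        proof (cases "par p \<in> R")
          case True
          moreover have "tp (par p) \<le> tp p - 1/2" using dec p True by (simp add: L_def)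
          ultimately have "par p \<in> L (a - 1/2)" using p by (simp add: L_def)
          thus ?thesis using p by (auto simp: L_def)
        next
          case False thus ?thesis using par p by (auto simp: L_def)
        qed
      qed
      ultimately show "finite (L a)" by (rule finite_subset[rotated])
    qed
  qed
  have RL: "R = L T" using tpT by (auto simp: L_def)
  have finR: "finite R"
  proof -
    have "T \<le> real (nat \<lceil>2*T + 2\<rceil>) / 2 - 1"
    proof -
      have "2*T + 2 \<le> real (nat \<lceil>2*T + 2\<rceil>)"
      proof -
        have "2*T + 2 \<le> real_of_int \<lceil>2*T + 2\<rceil>" by (rule le_of_int_ceiling)
        also have "\<dots> \<le> real (nat \<lceil>2*T + 2\<rceil>)" by simp
        finally show ?thesis .
      qed
      thus ?thesis by simp
    qed
    thus ?thesis using Lfin RL by auto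
  qed
  define h where "h n = Bf k e (T - tp n)" for n
  have node: "1 + (\<Sum>q\<in>{q\<in>R. par q = n}. h q) \<le> h n" if n: "n \<in> R" for n
  proof -
    let ?C = "{q\<in>R. par q = n}"
    have "(\<Sum>q\<in>?C. h q) = (\<Sum>q\<in>?C. (\<lambda>\<tau>. Bf k e (T - \<tau>)) (tp q))" by (simp add: h_def)
    also have "\<dots> \<le> (\<Sum>i=1..card ?C. (\<lambda>\<tau>. Bf k e (T - \<tau>)) (tp n - e + real i))"
    proof (rule rearr)
      show "finite ?C" using chfin by auto
      show "\<forall>\<tau>. real (card {q\<in>?C. tp q \<le> \<tau>}) \<le> max 0 (\<tau> - (tp n - e))"
        using cap n by (simp add: conj_assoc)
      show "\<forall>x y. x \<le> y \<longrightarrow> Bf k e (T - y) \<le> Bf k e (T - x)"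
        using e by (simp add: Bf_mono)
    qed
    also have "\<dots> \<le> (\<Sum>i=1..k. Bf k e (T - (tp n - e + real i)))"
      by (rule sum_mono2) (use chk n in \<open>auto simp: Bf_nonneg\<close>)
    also have "\<dots> = (\<Sum>i=1..k. Bf k e ((T - tp n) + e - real i))"
      by (simp add: algebra_simps)
    finally have "1 + (\<Sum>q\<in>?C. h q) \<le> 1 + (\<Sum>i=1..k. Bf k e ((T - tp n) + e - real i))" by simp
    also have "\<dots> \<le> h n" unfolding h_def by (rule Bf_rec) (use e tpT n in auto)
    finally show ?thesis .
  qed
  define R' where "R' = {q\<in>R. par q \<in> R}"
  define R0 where "R0 = {q\<in>R. par q = r0}"
  have fR': "finite R'" "finite R0" using finR by (auto simp: R'_def R0_def)
  have "(\<Sum>n\<in>R. 1 + (\<Sum>q\<in>{q\<in>R. par q = n}. h q)) \<le> (\<Sum>n\<in>R. h n)"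
    by (rule sum_mono) (rule node)
  moreover have "(\<Sum>n\<in>R. (\<Sum>q\<in>{q\<in>R. par q = n}. h q)) = (\<Sum>q\<in>R'. h q)"
  proof -
    have "(\<Sum>n\<in>R. (\<Sum>q\<in>{q\<in>R. par q = n}. h q)) = (\<Sum>n\<in>R. (\<Sum>q\<in>{x. x\<in>R' \<and> par x = n}. h q))"
    proof (rule sum.cong)
      fix n assume "n \<in> R"
      hence "{q\<in>R. par q = n} = {x. x\<in>R' \<and> par x = n}" by (auto simp: R'_def)
      thus "(\<Sum>q\<in>{q\<in>R. par q = n}. h q) = (\<Sum>q\<in>{x. x\<in>R' \<and> par x = n}. h q)" by simp
    qed simp
    also have "\<dots> = (\<Sum>q\<in>R'. h q)"
      by (rule sum.group) (use finR fR' in \<open>auto simp: R'_def\<close>)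
    finally show ?thesis .
  qed
  moreover have "(\<Sum>n\<in>R. h n) = (\<Sum>q\<in>R'. h q) + (\<Sum>q\<in>R0. h q)"
  proof -
    have "R = R' \<union> R0" "R' \<inter> R0 = {}" using par r0 by (auto simp: R'_def R0_def)
    thus ?thesis using fR' by (simp add: sum.union_disjoint)
  qed
  ultimately have cR: "real (card R) \<le> (\<Sum>q\<in>R0. h q)"
    by (simp add: sum.distrib)
  also have "(\<Sum>q\<in>R0. h q) = (\<Sum>q\<in>R0. (\<lambda>\<tau>. Bf k e (T - \<tau>)) (tp q))" by (simp add: h_def)
  also have "\<dots> \<le> (\<Sum>i=1..card R0. (\<lambda>\<tau>. Bf k e (T - \<tau>)) (g0 + real i))"
  proof (rule rearr)
    show "finite R0" by (rule fR')
    show "\<forall>\<tau>. real (card {q\<in>R0. tp q \<le> \<tau>}) \<le> max 0 (\<tau> - g0)"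
      using cap0 by (simp add: R0_def conj_assoc)
    show "\<forall>x y. x \<le> y \<longrightarrow> Bf k e (T - y) \<le> Bf k e (T - x)"
      using e by (simp add: Bf_mono)
  qed
  also have "\<dots> \<le> (\<Sum>i=1..U. Bf k e (T - (g0 + real i)))"
    by (rule sum_mono2) (use chU in \<open>auto simp: Bf_nonneg R0_def\<close>)
  finally show ?thesis using finR by (simp add: algebra_simps)
qed



lemma amt_nonneg:
  assumes "\<forall>s r c \<tau>. 0 \<le> rate s r c \<tau>" "\<forall>s r c \<tau>. rate s r c integrable_on {0..\<tau>}"
  shows "0 \<le> amt rate s r c \<tau>"
  unfolding amt_def using assms by (intro integral_nonneg) auto

lemma amt_mono:
  assumes "\<forall>s r c \<tau>. 0 \<le> rate s r c \<tau>" "\<forall>s r c \<tau>. rate s r c integrable_on {0..\<tau>}"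
    and "\<tau> \<le> \<tau>'"
  shows "amt rate s r c \<tau> \<le> amt rate s r c \<tau>'"
  unfolding amt_def using assms by (intro integral_subset_le) auto

lemma amt_pos:
  assumes "\<forall>s r c \<tau>. rate s r c integrable_on {0..\<tau>}"
    and "0 < amt rate s r c \<tau>"
  shows "\<exists>x. 0 < rate s r c x \<and> x \<le> \<tau>"
proof (rule ccontr)
  assume "\<not> ?thesis"
  hence "\<forall>x\<in>{0..\<tau>}. rate s r c x \<le> 0" by force
  hence "amt rate s r c \<tau> \<le> integral {0..\<tau>} (\<lambda>_. 0::real)"
    unfolding amt_def using assms(1) by (intro integral_le) auto
  thus False using assms(2) by simp
qed

lemma capacity:
  fixes f :: "'i \<Rightarrow> 'a" and g :: "'i \<Rightarrow> nat"
  assumes nn: "\<forall>s r c \<tau>. 0 \<le> rate s r c \<tau>" and integ: "\<forall>s r c \<tau>. rate s r c integrable_on {0..\<tau>}"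
    and capa: "\<forall>s \<tau> F. finite F \<longrightarrow> (\<Sum>(r, c)\<in>F. rate s r c \<tau>) \<le> 1"
    and I: "finite I" "inj_on (\<lambda>i. (f i, g i)) I"
    and sig: "0 \<le> \<sigma>" "\<forall>i\<in>I. \<forall>x. 0 < rate s (f i) (g i) x \<longrightarrow> \<sigma> \<le> x"
  shows "(\<Sum>i\<in>I. amt rate s (f i) (g i) \<tau>) \<le> max 0 (\<tau> - \<sigma>)"
proof -
  have "(\<Sum>i\<in>I. amt rate s (f i) (g i) \<tau>) = integral {0..\<tau>} (\<lambda>x. \<Sum>i\<in>I. rate s (f i) (g i) x)"
    unfolding amt_def by (rule integral_sum[symmetric]) (use I integ in auto)
  also have "\<dots> \<le> integral {0..\<tau>} (\<lambda>x. if x \<in> {\<sigma>..} then 1 else 0)"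
  proof (rule integral_le)
    show "(\<lambda>x. \<Sum>i\<in>I. rate s (f i) (g i) x) integrable_on {0..\<tau>}"
      by (rule integrable_sum) (use I integ in auto)
    show "(\<lambda>x. if x \<in> {\<sigma>..} then 1 else 0::real) integrable_on {0..\<tau>}"
      unfolding integrable_restrict_Int by auto
    fix x
    have le1: "(\<Sum>i\<in>I. rate s (f i) (g i) x) \<le> 1"
    proof -
      have "(\<Sum>i\<in>I. rate s (f i) (g i) x) = (\<Sum>(r, c)\<in>(\<lambda>i. (f i, g i)) ` I. rate s r c x)"
        by (subst sum.reindex) (use I in auto)
      also have "\<dots> \<le> 1" using capa I by auto
      finally show ?thesis .
    qed
    show "(\<Sum>i\<in>I. rate s (f i) (g i) x) \<le> (if x \<in> {\<sigma>..} then 1 else 0)"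
    proof (cases "\<sigma> \<le> x")
      case True thus ?thesis using le1 by simp
    next
      case False
      hence "\<forall>i\<in>I. rate s (f i) (g i) x = 0" using sig nn by (metis order_less_le)
      thus ?thesis by simp
    qed
  qed
  also have "\<dots> = integral ({\<sigma>..} \<inter> {0..\<tau>}) (\<lambda>_. 1::real)"
    by (rule integral_restrict_Int)
  also have "{\<sigma>..} \<inter> {0..\<tau>} = {\<sigma>..\<tau>}" using sig by auto
  also have "integral {\<sigma>..\<tau>} (\<lambda>_. 1::real) \<le> max 0 (\<tau> - \<sigma>)" by simp
  finally show ?thesis .
qed


lemma averaging:
  assumes nn: "\<forall>s r c \<tau>. 0 \<le> rate s r c \<tau>" and integ: "\<forall>s r c \<tau>. rate s r c integrable_on {0..\<tau>}"
    and capa: "\<forall>s \<tau> F. finite F \<longrightarrow> (\<Sum>(r, c)\<in>F. rate s r c \<tau>) \<le> 1"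
    and pos: "\<forall>s r c \<tau>. 0 < rate s r c \<tau> \<longrightarrow> 0 \<le> \<tau>"
    and nbfin: "finite {r. \<exists>c \<tau>. 0 < rate src r c \<tau>}"
    and t: "0 \<le> t'"
  shows "\<exists>c\<ge>1. finite {p. 1 \<le> amt rate src p c (gen U c + t')} \<and>
                card {p. 1 \<le> amt rate src p c (gen U c + t')} \<le> U"
proof -
  define A where "A c = {p. 1 \<le> amt rate src p c (gen U c + t')}" for c
  have Afin: "finite (A c)" for c
  proof (rule finite_subset[OF _ nbfin])
    show "A c \<subseteq> {r. \<exists>c \<tau>. 0 < rate src r c \<tau>}"
    proof
      fix p assume "p \<in> A c"
      hence "0 < amt rate src p c (gen U c + t')" by (simp add: A_def)
      thus "p \<in> {r. \<exists>c \<tau>. 0 < rate src r c \<tau>}" using amt_pos[OF integ] by blast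
    qed
  qed
  show ?thesis
  proof (rule ccontr)
    assume "\<not> ?thesis"
    hence big: "\<forall>c\<ge>1. U + 1 \<le> card (A c)" using Afin unfolding A_def by (metis Suc_eq_plus1 not_less_eq_eq)
    define n where "n = nat \<lceil>t'\<rceil> + 1"
    have n1: "n \<ge> 1" by (simp add: n_def)
    have nt: "t' < real n"
    proof -
      have "t' \<le> real_of_int \<lceil>t'\<rceil>" by (rule le_of_int_ceiling)
      also have "\<dots> \<le> real (nat \<lceil>t'\<rceil>)" by simp
      finally show ?thesis by (simp add: n_def)
    qed
    define I where "I = (SIGMA c:{1..n}. A c)"
    have fI: "finite I" using Afin by (simp add: I_def)
    have "card I = (\<Sum>c\<in>{1..n}. card (A c))" unfolding I_def
      by (rule card_SigmaI) (use Afin in auto)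
    also have "\<dots> \<ge> (\<Sum>c\<in>{1..n}. U + 1)" by (rule sum_mono) (use big in auto)
    finally have cI: "n * (U + 1) \<le> card I" by simp
    define \<tau> where "\<tau> = gen U n + t'"
    have "real (card I) = (\<Sum>i\<in>I. 1)" by simp
    also have "\<dots> \<le> (\<Sum>i\<in>I. amt rate src (snd i) (fst i) \<tau>)"
    proof (rule sum_mono)
      fix i assume "i \<in> I"
      then obtain c p where i: "i = (c, p)" "c \<in> {1..n}" "p \<in> A c" by (auto simp: I_def)
      have "gen U c \<le> gen U n" using i(2) unfolding gen_def by (intro of_nat_mono mult_right_mono diff_le_mono) auto
      hence "amt rate src p c (gen U c + t') \<le> amt rate src p c \<tau>"
        unfolding \<tau>_def by (intro amt_mono[OF nn integ]) simp
      thus "1 \<le> amt rate src (snd i) (fst i) \<tau>" using i by (simp add: A_def)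
    qed
    also have "\<dots> \<le> max 0 (\<tau> - 0)"
      by (rule capacity[OF nn integ capa fI]) (use pos in \<open>auto simp: inj_on_def\<close>)
    also have "\<dots> = real ((n - 1) * U) + t'" using t by (simp add: \<tau>_def gen_def)
    finally have "real (n * (U + 1)) \<le> real ((n - 1) * U) + t'" using cI
      by (meson of_nat_le_iff order_trans)
    moreover have "real ((n - 1) * U) + real n \<le> real (n * (U + 1))"
      using n1 by (simp add: of_nat_diff algebra_simps)
    ultimately show False using nt by simp
  qed
qed


lemma core:
  assumes V: "valid_schedule src P U k rate" and srcP: "src \<notin> P"
    and t: "0 \<le> t" and e: "0 < e" "e \<le> 1/2"
    and ineq: "(1 + 2*e) * (t + e) < real_of_int \<lfloor>t\<rfloor> + 1"
  shows "finite (diffused P U rate t) \<and> card (diffused P U rate t) \<le> Nbar k U \<lfloor>t\<rfloor>"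
proof -
  note V' = V[unfolded valid_schedule_def]
  note nn = V'[THEN conjunct1]
  note integ = V'[THEN conjunct2, THEN conjunct1]
  note pos = V'[THEN conjunct2, THEN conjunct2, THEN conjunct1]
  note capa = V'[THEN conjunct2, THEN conjunct2, THEN conjunct2, THEN conjunct1]
  note sf = V'[THEN conjunct2, THEN conjunct2, THEN conjunct2, THEN conjunct2, THEN conjunct1]
  note nb = V'[THEN conjunct2, THEN conjunct2, THEN conjunct2, THEN conjunct2, THEN conjunct2]
  obtain c where c: "c \<ge> 1" "finite {p. 1 \<le> amt rate src p c (gen U c + (t + e))}"
      "card {p. 1 \<le> amt rate src p c (gen U c + (t + e))} \<le> U"
  proof -
    have pos0: "\<forall>s r c \<tau>. 0 < rate s r c \<tau> \<longrightarrow> 0 \<le> \<tau>" using pos by blast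
    have nbs: "finite {r. \<exists>c \<tau>. 0 < rate src r c \<tau>}" using nb by blast
    have te: "0 \<le> t + e" using t e by simp
    show ?thesis using averaging[OF nn integ capa pos0 nbs te, of U] that by blast
  qed
  define T where "T = gen U c + (t + e)"
  define W where "W p = {\<tau>. 0 \<le> \<tau> \<and> (\<exists>s. 1 \<le> amt rate s p c \<tau>)}" for p
  define \<rho> where "\<rho> p = Inf (W p)" for p
  define R where "R = {p\<in>P. \<exists>\<tau>\<in>W p. \<tau> \<le> T}"
  have bdd: "bdd_below (W p)" for p unfolding W_def by (rule bdd_belowI[of _ 0]) auto
  have \<rho>_lower: "\<tau> \<in> W p \<Longrightarrow> \<rho> p \<le> \<tau>" for \<tau> p unfolding \<rho>_def using bdd by (simp add: cInf_lower)
  have \<rho>_nonneg: "W p \<noteq> {} \<Longrightarrow> 0 \<le> \<rho> p" for p unfolding \<rho>_def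
    by (rule cInf_greatest) (auto simp: W_def)
  have gen0: "0 \<le> gen U c" by (simp add: gen_def)
  have ex: "\<forall>p\<in>R. \<exists>st. 0 \<le> snd st \<and> snd st \<le> T \<and> snd st \<le> \<rho> p + e \<and> 1 \<le> amt rate (fst st) p c (snd st)"
  proof
    fix p assume "p \<in> R"
    then obtain w0 where w0: "w0 \<in> W p" "w0 \<le> T" by (auto simp: R_def)
    have "\<rho> p < \<rho> p + e" using e by simp
    then obtain w where w: "w \<in> W p" "w < \<rho> p + e"
    proof -
      have ne: "W p \<noteq> {}" using w0 by auto
      have "Inf (W p) < \<rho> p + e" using e by (simp add: \<rho>_def)
      hence "\<exists>x\<in>W p. x < \<rho> p + e" by (subst (asm) cInf_less_iff[OF ne bdd])
      thus ?thesis using that by blast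
    qed
    show "\<exists>st. 0 \<le> snd st \<and> snd st \<le> T \<and> snd st \<le> \<rho> p + e \<and> 1 \<le> amt rate (fst st) p c (snd st)"
    proof (cases "w \<le> w0")
      case True
      then obtain s where "0 \<le> w" "1 \<le> amt rate s p c w" using w by (auto simp: W_def)
      thus ?thesis using True w w0 by (intro exI[of _ "(s, w)"]) auto
    next
      case False
      then obtain s where "0 \<le> w0" "1 \<le> amt rate s p c w0" using w0 by (auto simp: W_def)
      thus ?thesis using False w w0 by (intro exI[of _ "(s, w0)"]) auto
    qed
  qed
  obtain sel where sel: "\<forall>p\<in>R. 0 \<le> snd (sel p) \<and> snd (sel p) \<le> T \<and> snd (sel p) \<le> \<rho> p + e
      \<and> 1 \<le> amt rate (fst (sel p)) p c (snd (sel p))" using bchoice[OF ex] by blast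
  define par where "par p = fst (sel p)" for p
  define tp where "tp p = snd (sel p)" for p
  have selp: "0 \<le> tp p" "tp p \<le> T" "tp p \<le> \<rho> p + e" "1 \<le> amt rate (par p) p c (tp p)"
    if "p \<in> R" for p using sel that unfolding par_def tp_def by auto
  have hp: "x \<in> W s" if "0 < rate s r c x" "s \<noteq> src" for s r x
  proof -
    have "holds src U rate s c x" using sf that by blast
    hence "\<exists>s'. 1 \<le> amt rate s' s c x" using that by (simp add: holds_def)
    moreover have "0 \<le> x" using pos that by blast
    ultimately show ?thesis by (simp add: W_def)
  qed
  have hs: "gen U c \<le> x" if "0 < rate src r c x" for r x
  proof -
    have "holds src U rate src c x" using sf that by blast
    thus ?thesis by (simp add: holds_def)
  qed
  have chx: "\<exists>x. 0 < rate (par p) p c x \<and> x \<le> tp p" if "p \<in> R" for p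
    using amt_pos[OF integ] selp(4)[OF that] by force
  have srcR: "src \<notin> R" using srcP by (auto simp: R_def)
  have parR: "\<forall>p\<in>R. par p \<in> R \<or> par p = src"
  proof
    fix p assume p: "p \<in> R"
    obtain x where x: "0 < rate (par p) p c x" "x \<le> tp p" using chx[OF p] by blast
    show "par p \<in> R \<or> par p = src"
    proof (cases "par p = src")
      case False
      hence "par p \<in> P" using pos x by blast
      moreover have "x \<in> W (par p)" using hp[OF x(1) False] .
      moreover have "x \<le> T" using x selp[OF p] by simp
      ultimately show ?thesis by (auto simp: R_def)
    qed simp
  qed
  have chsub: "{q\<in>R. par q = n} \<subseteq> {r. \<exists>c \<tau>. 0 < rate n r c \<tau>}" for n
    using chx by blast
  have chfin: "\<forall>n. finite {q\<in>R. par q = n}" using chsub nb by (metis finite_subset)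
  have chk: "\<forall>n\<in>R. card {q\<in>R. par q = n} \<le> k"
  proof
    fix n
    have "card {q\<in>R. par q = n} \<le> card {r. \<exists>c \<tau>. 0 < rate n r c \<tau>}"
      using nb chsub[of n] by (intro card_mono) auto
    thus "card {q\<in>R. par q = n} \<le> k" using nb[rule_format, of n] by linarith
  qed
  have capgen: "real (card {q\<in>R. par q = n \<and> tp q \<le> \<tau>}) \<le> max 0 (\<tau> - \<sigma>)"
    if sig: "0 \<le> \<sigma>" "\<forall>q x. 0 < rate n q c x \<longrightarrow> \<sigma> \<le> x" for n \<sigma> \<tau>
  proof -
    let ?Q = "{q\<in>R. par q = n \<and> tp q \<le> \<tau>}"
    have fQ: "finite ?Q" using chfin[rule_format, of n] by (rule finite_subset[rotated]) auto
    have "real (card ?Q) = (\<Sum>q\<in>?Q. 1)" by simp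
    also have "\<dots> \<le> (\<Sum>q\<in>?Q. amt rate n (id q) ((\<lambda>_. c) q) \<tau>)"
    proof (rule sum_mono)
      fix q assume q: "q \<in> ?Q"
      hence "1 \<le> amt rate n q c (tp q)" using selp(4) by auto
      also have "\<dots> \<le> amt rate n q c \<tau>" using q by (intro amt_mono[OF nn integ]) auto
      finally show "1 \<le> amt rate n (id q) ((\<lambda>_. c) q) \<tau>" by simp
    qed
    also have "\<dots> \<le> max 0 (\<tau> - \<sigma>)"
      by (rule capacity[OF nn integ capa fQ]) (use sig in \<open>auto simp: inj_on_def\<close>)
    finally show ?thesis .
  qed
  have cap: "\<forall>n\<in>R. \<forall>\<tau>. real (card {q\<in>R. par q = n \<and> tp q \<le> \<tau>}) \<le> max 0 (\<tau> - (tp n - e))"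
  proof (intro ballI allI)
    fix n \<tau> assume n: "n \<in> R"
    have nsrc: "n \<noteq> src" using n srcR by auto
    have "W n \<noteq> {}" using n by (auto simp: R_def)
    hence "real (card {q\<in>R. par q = n \<and> tp q \<le> \<tau>}) \<le> max 0 (\<tau> - \<rho> n)"
      using \<rho>_nonneg hp[OF _ nsrc] \<rho>_lower by (intro capgen) auto
    also have "\<dots> \<le> max 0 (\<tau> - (tp n - e))" using selp(3)[OF n] by simp
    finally show "real (card {q\<in>R. par q = n \<and> tp q \<le> \<tau>}) \<le> max 0 (\<tau> - (tp n - e))" .
  qed
  have cap0: "\<forall>\<tau>. real (card {q\<in>R. par q = src \<and> tp q \<le> \<tau>}) \<le> max 0 (\<tau> - gen U c)"
    using capgen[OF gen0] hs by blast
  have dec: "\<forall>p\<in>R. par p \<in> R \<longrightarrow> tp (par p) \<le> tp p - 1/2"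
  proof (intro ballI impI)
    fix p assume p: "p \<in> R" and pp: "par p \<in> R"
    have fin: "finite {q\<in>R. par q = par p \<and> tp q \<le> tp p}"
      using chfin[rule_format, of "par p"] by (rule finite_subset[rotated]) auto
    have "p \<in> {q\<in>R. par q = par p \<and> tp q \<le> tp p}" using p by simp
    hence "{q\<in>R. par q = par p \<and> tp q \<le> tp p} \<noteq> {}" by blast
    hence "0 < card {q\<in>R. par q = par p \<and> tp q \<le> tp p}" using fin by (simp add: card_gt_0_iff)
    hence "1 \<le> real (card {q\<in>R. par q = par p \<and> tp q \<le> tp p})" by simp
    moreover have "real (card {q\<in>R. par q = par p \<and> tp q \<le> tp p}) \<le> max 0 (tp p - (tp (par p) - e))"
      using cap pp by blast
    ultimately have "1 \<le> max 0 (tp p - (tp (par p) - e))" by linarith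
    thus "tp (par p) \<le> tp p - 1/2" using e by (simp add: max_def split: if_splits)
  qed
  have chU: "card {q\<in>R. par q = src} \<le> U"
  proof -
    have "{q\<in>R. par q = src} \<subseteq> {p. 1 \<le> amt rate src p c (gen U c + (t + e))}"
    proof
      fix q assume q: "q \<in> {q\<in>R. par q = src}"
      hence "1 \<le> amt rate src q c (tp q)" using selp(4) by auto
      also have "\<dots> \<le> amt rate src q c T" using q selp(2) by (intro amt_mono[OF nn integ]) auto
      finally show "q \<in> {p. 1 \<le> amt rate src p c (gen U c + (t + e))}" by (simp add: T_def)
    qed
    thus ?thesis using c(2,3) by (meson card_mono order_trans)
  qed
  have tpT: "\<forall>p\<in>R. 0 \<le> tp p \<and> tp p \<le> T" using selp by auto
  have TC: "finite R \<and> real (card R) \<le> (\<Sum>i=1..U. Bf k e (T - gen U c - real i))"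
    by (rule tree_count[OF e srcR parR tpT dec chfin chk chU cap cap0])
  have "(\<Sum>i=1..U. Bf k e (T - gen U c - real i)) \<le> (\<Sum>i=1..U. real (Sk k (\<lfloor>t\<rfloor> - int i + 1)))"
  proof (rule sum_mono)
    fix i assume "i \<in> {1..U}"
    have "(1 + 2*e) * (t + e - real i) \<le> (1 + 2*e) * (t + e) - real i" using e by (simp add: algebra_simps)
    also have "\<dots> < real_of_int (\<lfloor>t\<rfloor> - int i + 1)" using ineq by simp
    finally have "\<lfloor>(1 + 2*e) * (t + e - real i)\<rfloor> \<le> \<lfloor>t\<rfloor> - int i" by linarith
    thus "Bf k e (T - gen U c - real i) \<le> real (Sk k (\<lfloor>t\<rfloor> - int i + 1))"
      unfolding Bf_def T_def by (simp add: Sk_mono)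
  qed
  also have "\<dots> = real (Nbar k U \<lfloor>t\<rfloor>)" by (simp add: Nbar_def)
  finally have cR: "card R \<le> Nbar k U \<lfloor>t\<rfloor>" using TC by linarith
  have sub: "diffused P U rate t \<subseteq> R"
  proof
    fix p assume "p \<in> diffused P U rate t"
    hence p: "p \<in> P" "Dmax U rate p \<le> ereal t" by (auto simp: diffused_def)
    have "delay U rate p c \<le> Dmax U rate p" unfolding Dmax_def using c(1) by (intro SUP_upper) auto
    hence d: "recv rate p c - ereal (gen U c) \<le> ereal t" using p(2) unfolding delay_def by (rule order_trans)
    have "recv rate p c < ereal T"
    proof (cases "recv rate p c")
      case (real r) thus ?thesis using d e by (simp add: T_def)
    next
      case PInf thus ?thesis using d by simp
    next
      case MInf thus ?thesis by simp
    qed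
    hence "Inf (ereal ` W p) < ereal T" by (simp add: recv_def W_def)
    then obtain x where "x \<in> W p" "ereal x < ereal T" by (auto simp: Inf_less_iff)
    thus "p \<in> R" using p unfolding R_def by (auto intro: less_imp_le)
  qed
  have "card (diffused P U rate t) \<le> card R" using TC sub by (intro card_mono) auto
  thus ?thesis using TC cR sub finite_subset by (metis order_trans)
qed


lemma choose_eps:
  assumes t: "0 \<le> (t::real)"
  shows "\<exists>e. 0 < e \<and> e \<le> 1/2 \<and> (1 + 2*e) * (t + e) < real_of_int \<lfloor>t\<rfloor> + 1"
proof -
  define d where "d = real_of_int \<lfloor>t\<rfloor> + 1 - t"
  have d: "0 < d" unfolding d_def by linarith
  define e where "e = min (1/4) (d / (4*(t+2)))"
  have e0: "0 < e" using d t by (simp add: e_def)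
  have e1: "e \<le> 1/4" unfolding e_def by (rule min.cobounded1)
  have "e \<le> d / (4*(t+2))" by (simp add: e_def)
  hence e2: "e * (4*(t+2)) \<le> d" using t by (simp add: pos_le_divide_eq)
  have "(1 + 2*e) * (t + e) = t + e * (1 + 2*t + 2*e)" by (simp add: algebra_simps)
  also have "e * (1 + 2*t + 2*e) \<le> e * (2*t + 2)" using e0 e1 by (intro mult_left_mono) auto
  also have "e * (2*t + 2) < d"
  proof -
    have "e * (2*t + 2) \<le> e * (4*(t+2)) / 2" using e0 t by (simp add: algebra_simps)
    also have "\<dots> < d" using e2 d by simp
    finally show ?thesis .
  qed
  finally have "(1 + 2*e) * (t + e) < t + d" by simp
  thus ?thesis using e0 e1 by (intro exI[of _ e]) (auto simp: d_def)
qed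

theorem theorem1:
  fixes src :: 'a and P :: "'a set" and U k :: nat
    and rate :: "'a \<Rightarrow> 'a \<Rightarrow> nat \<Rightarrow> real \<Rightarrow> real"
  assumes "1 \<le> U" and "1 \<le> k" and "src \<notin> P"
    and "valid_schedule src P U k rate"
  shows "(\<forall>t::nat. finite (diffused P U rate (real t)) \<and>
                    card (diffused P U rate (real t)) \<le> Nbar k U (int t)) \<and>
         (\<forall>t::real. 0 \<le> t \<and> t \<notin> \<int> \<longrightarrow>
                    finite (diffused P U rate t) \<and>
                    card (diffused P U rate t) \<le> Nbar k U \<lfloor>t\<rfloor>)"
proof -
  have gen: "finite (diffused P U rate t) \<and> card (diffused P U rate t) \<le> Nbar k U \<lfloor>t\<rfloor>"
    if t0: "0 \<le> t" for t :: real
  proof -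
    obtain e where "0 < e" "e \<le> 1/2" "(1 + 2*e) * (t + e) < real_of_int \<lfloor>t\<rfloor> + 1"
      using choose_eps[OF t0] by blast
    thus ?thesis using core[OF assms(4,3) t0] by blast
  qed
  show ?thesis
  proof (intro conjI allI impI)
    fix t :: nat
    show "finite (diffused P U rate (real t))" using gen[of "real t"] by simp
    show "card (diffused P U rate (real t)) \<le> Nbar k U (int t)" using gen[of "real t"] by simp
  next
    fix t :: real assume "0 \<le> t \<and> t \<notin> \<int>"
    thus "finite (diffused P U rate t)" "card (diffused P U rate t) \<le> Nbar k U \<lfloor>t\<rfloor>"
      using gen by auto
  qed
qed


end
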